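(* Let $\Gamma$, $\varphi$, $\Xi$, $(\cdot)^\flat$ and $\mathscr{M}$ be as in the context. For every $\xi\in\Xi$, every base $\mathscr{X}\supseteq\mathscr{M}$ and every finite multiset of atoms $U$: $\Vdash^{U}_{\mathscr{X}}\xi^\flat$ if and only if $\Vdash^{U}_{\mathscr{X}}\xi$.
   Context: Fix a countably infinite set $\mathbb{A}$ of atoms. IMLL formulas: $\varphi::= p\in\mathbb{A}\mid\varphi\otimes\varphi\mid \mathrm{I}\mid\varphi\multimap\varphi$; multisets are finite, "$,$" is multiset union. An atomic rule is $(P_1\triangleright p_1,\dots,P_n\triangleright p_n)\Rightarrow p$ ($n\ge0$, $P_i$ finite multisets of atoms, $\triangleright p$ abbreviating $\emptyset\triangleright p$); a base is a set of atomic rules. Derivability $\vdash_{\mathscr{B}}$ is the least relation with (Ref) $[p]\vdash_{\mathscr{B}}p$; (App) if $(P_1\triangleright p_1,\dots,P_n\triangleright p_n)\Rightarrow p\in\mathscr{B}$ and $S_i,P_i\vdash_{\mathscr{B}}p_i$ for all $i$, then $S_1,\dots,S_n\vdash_{\mathscr{B}}p$. Support: (At) $\Vdash^{P}_{\mathscr{B}}p$ iff $P\vdash_{\mathscr{B}}p$; ($\otimes$) $\Vdash^{P}_{\mathscr{B}}\varphi\otimes\psi$ iff for every $\mathscr{X}\supseteq\mathscr{B}$, multiset of atoms $U$, atom $p$, if $\varphi,\psi\Vdash^{U}_{\mathscr{X}}p$ then $\Vdash^{P,U}_{\mathscr{X}}p$; ($\mathrm{I}$) $\Vdash^{P}_{\mathscr{B}}\mathrm{I}$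 iff for every $\mathscr{X}\supseteq\mathscr{B}$, $U$, $p$, if $\Vdash^{U}_{\mathscr{X}}p$ then $\Vdash^{P,U}_{\mathscr{X}}p$; ($\multimap$) $\Vdash^{P}_{\mathscr{B}}\varphi\multimap\psi$ iff $\varphi\Vdash^{P}_{\mathscr{B}}\psi$; (comma) for nonempty $\Gamma,\Delta$, $\Vdash^{P}_{\mathscr{B}}\Gamma,\Delta$ iff $P=U,V$ for some $U,V$ with $\Vdash^{U}_{\mathscr{B}}\Gamma$, $\Vdash^{V}_{\mathscr{B}}\Delta$ (singleton $[\varphi]$ supported iff $\varphi$ is); (Inf) for nonempty $\Gamma$, $\Gamma\Vdash^{P}_{\mathscr{B}}\varphi$ iff for every $\mathscr{X}\supseteq\mathscr{B}$ and $U$, if $\Vdash^{U}_{\mathscr{X}}\Gamma$ then $\Vdash^{P,U}_{\mathscr{X}}\varphi$. Fix a finite multiset $\Gamma$ and formula $\varphi$; $\Xi$ is the set of all subformulas of formulas in $\Gamma$ and of $\varphi$. $(\cdot)^\flat:\Xi\to\mathbb{A}$ is an injection with $p^\flat=p$ for atoms $p\in\Xi$ and, for non-atomic $\xi$, $\xi^\flat$ an atom not occurring in $\Xi$. The base $\mathscr{M}$ consists of: for each $\sigma\multimap\tau\in\Xi$, $(\sigma^\flat\triangleright\tau^\flat)\Rightarrow(\sigma\multimap\tau)^\flat$ and $(\triangleright(\sigma\multimap\tau)^\flat,\triangleright\sigma^\flat)\Rightarrow\tau^\flat$; for each $\sigma\otimes\tau\in\Xi$, $(\triangleright\sigma^\flat,\triangleright\tau^\flat)\Rightarrow(\sigma\otimes\tau)^\flat$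 and, for every atom $p$, $(\triangleright(\sigma\otimes\tau)^\flat,\ \sigma^\flat,\tau^\flat\triangleright p)\Rightarrow p$; if $\mathrm{I}\in\Xi$, $\Rightarrow\mathrm{I}^\flat$ and, for every atom $p$, $(\triangleright\mathrm{I}^\flat,\triangleright p)\Rightarrow p$. *)

theory Defs
  imports Main "HOL-Library.Multiset" "HOL-Library.Countable"
begin

datatype 'a fml = At 'a | Tensor "'a fml" "'a fml" | One | Lolli "'a fml" "'a fml"

text \<open>An atomic rule (P1|>p1,...,Pn|>pn) => p is represented as the pair
  of the premise list [(P1,p1),...,(Pn,pn)] and the conclusion p.\<close>
type_synonym 'a rule = "('a multiset \<times> 'a) list \<times> 'a"
type_synonym 'a base = "'a rule set"

inductive deriv :: "'a base \<Rightarrow> 'a multiset \<Rightarrow> 'a \<Rightarrow> bool" where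
  Ref: "deriv B {#p#} p"
| App: "(prems, p) \<in> B \<Longrightarrow>
        list_all2 (\<lambda>S Pq. deriv B (S + fst Pq) (snd Pq)) Ss prems \<Longrightarrow>
        deriv B (sum_list Ss) p"

text \<open>Support of a single formula. The clauses for tensor and linear implication
  unfold the (Inf) and (comma) clauses for the contexts [phi,psi] and [phi].\<close>
primrec supp :: "'a base \<Rightarrow> 'a multiset \<Rightarrow> 'a fml \<Rightarrow> bool" where
  "supp B P (At p) \<longleftrightarrow> deriv B P p"
| "supp B P (Tensor \<phi> \<psi>) \<longleftrightarrow>
     (\<forall>X U p. B \<subseteq> X \<longrightarrow>
        (\<forall>Y V W. X \<subseteq> Y \<longrightarrow> supp Y V \<phi> \<longrightarrow> supp Y W \<psi> \<longrightarrow> deriv Y (U + (V + W)) p)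
        \<longrightarrow> deriv X (P + U) p)"
| "supp B P One \<longleftrightarrow> (\<forall>X U p. B \<subseteq> X \<longrightarrow> deriv X U p \<longrightarrow> deriv X (P + U) p)"
| "supp B P (Lolli \<phi> \<psi>) \<longleftrightarrow>
     (\<forall>X U. B \<subseteq> X \<longrightarrow> supp X U \<phi> \<longrightarrow> supp X (P + U) \<psi>)"

primrec subfmls :: "'a fml \<Rightarrow> 'a fml set" where
  "subfmls (At p) = {At p}"
| "subfmls (Tensor a b) = insert (Tensor a b) (subfmls a \<union> subfmls b)"
| "subfmls One = {One}"
| "subfmls (Lolli a b) = insert (Lolli a b) (subfmls a \<union> subfmls b)"

primrec fatoms :: "'a fml \<Rightarrow> 'a set" where
  "fatoms (At p) = {p}"
| "fatoms (Tensor a b) = fatoms a \<union> fatoms b"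
| "fatoms One = {}"
| "fatoms (Lolli a b) = fatoms a \<union> fatoms b"

definition Xi :: "'a fml multiset \<Rightarrow> 'a fml \<Rightarrow> 'a fml set" where
  "Xi \<Gamma> \<phi> = (\<Union>\<gamma>\<in>set_mset \<Gamma>. subfmls \<gamma>) \<union> subfmls \<phi>"

definition is_atomic :: "'a fml \<Rightarrow> bool" where
  "is_atomic \<xi> \<longleftrightarrow> (\<exists>p. \<xi> = At p)"

definition flat_ok :: "'a fml set \<Rightarrow> ('a fml \<Rightarrow> 'a) \<Rightarrow> bool" where
  "flat_ok \<Xi> fl \<longleftrightarrow> inj_on fl \<Xi>
     \<and> (\<forall>p. At p \<in> \<Xi> \<longrightarrow> fl (At p) = p)
     \<and> (\<forall>\<xi>\<in>\<Xi>. \<not> is_atomic \<xi> \<longrightarrow> fl \<xi> \<notin> (\<Union>\<eta>\<in>\<Xi>. fatoms \<eta>))"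

definition baseM :: "'a fml set \<Rightarrow> ('a fml \<Rightarrow> 'a) \<Rightarrow> 'a base" where
  "baseM \<Xi> fl =
     {([({#fl \<sigma>#}, fl \<tau>)], fl (Lolli \<sigma> \<tau>)) | \<sigma> \<tau>. Lolli \<sigma> \<tau> \<in> \<Xi>}
   \<union> {([({#}, fl (Lolli \<sigma> \<tau>)), ({#}, fl \<sigma>)], fl \<tau>) | \<sigma> \<tau>. Lolli \<sigma> \<tau> \<in> \<Xi>}
   \<union> {([({#}, fl \<sigma>), ({#}, fl \<tau>)], fl (Tensor \<sigma> \<tau>)) | \<sigma> \<tau>. Tensor \<sigma> \<tau> \<in> \<Xi>}
   \<union> {([({#}, fl (Tensor \<sigma> \<tau>)), ({#fl \<sigma>, fl \<tau>#}, p)], p) | \<sigma> \<tau> p. Tensor \<sigma> \<tau> \<in> \<Xi>}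
   \<union> (if One \<in> \<Xi> then {([], fl One)} else {})
   \<union> {([({#}, fl One), ({#}, p)], p) | p. One \<in> \<Xi>}"

end

theory Submission
  imports Defs
begin

lemma mL1: "Lolli s t \<in> Xs \<Longrightarrow> ([({#fl s#}, fl t)], fl (Lolli s t)) \<in> baseM Xs fl"
  unfolding baseM_def by blast
lemma mL2: "Lolli s t \<in> Xs \<Longrightarrow> ([({#}, fl (Lolli s t)), ({#}, fl s)], fl t) \<in> baseM Xs fl"
  unfolding baseM_def by blast
lemma mT1: "Tensor s t \<in> Xs \<Longrightarrow> ([({#}, fl s), ({#}, fl t)], fl (Tensor s t)) \<in> baseM Xs fl"
  unfolding baseM_def by blast
lemma mT2: "Tensor s t \<in> Xs \<Longrightarrow> ([({#}, fl (Tensor s t)), ({#fl s, fl t#}, p)], p) \<in> baseM Xs fl"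
  unfolding baseM_def by blast
lemma mO1: "One \<in> Xs \<Longrightarrow> ([], fl One) \<in> baseM Xs fl"
  unfolding baseM_def by auto
lemma mO2: "One \<in> Xs \<Longrightarrow> ([({#}, fl One), ({#}, p)], p) \<in> baseM Xs fl"
  unfolding baseM_def by blast
lemma deriv_mono: "deriv B P p \<Longrightarrow> B \<subseteq> C \<Longrightarrow> deriv C P p"
proof (induction rule: deriv.induct)
  case (Ref B p) then show ?case by (simp add: deriv.Ref)
next
  case (App prems p B Ss)
  have "list_all2 (\<lambda>S Pq. deriv C (S + fst Pq) (snd Pq)) Ss prems"
    using App(2,3) by (auto elim: list_all2_mono)
  then show ?case using App(1,3) by (auto intro: deriv.App)
qed

lemma app0: "([], p) \<in> B \<Longrightarrow> deriv B {#} p"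
  using deriv.App[of "[]" p B "[]"] by simp

lemma app1: "([(A1,p1)], p) \<in> B \<Longrightarrow> deriv B (S1+A1) p1 \<Longrightarrow> deriv B S1 p"
  using deriv.App[of "[(A1,p1)]" p B "[S1]"] by simp

lemma app2: "([(A1,p1),(A2,p2)], p) \<in> B \<Longrightarrow> deriv B (S1+A1) p1 \<Longrightarrow> deriv B (S2+A2) p2
   \<Longrightarrow> deriv B (S1+S2) p"
  using deriv.App[of "[(A1,p1),(A2,p2)]" p B "[S1,S2]"] by simp

lemma subfmls_self: "a \<in> subfmls a"
  by (cases a) auto

lemma subfmls_trans: "x \<in> subfmls a \<Longrightarrow> subfmls x \<subseteq> subfmls a"
  by (induction a) auto

lemma Xi_closed: "x \<in> Xi G f \<Longrightarrow> y \<in> subfmls x \<Longrightarrow> y \<in> Xi G f"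
  unfolding Xi_def using subfmls_trans by blast

theorem mainTheorem14:
  fixes \<Gamma> :: "('a::countable) fml multiset" and \<phi> :: "'a fml" and fl :: "'a fml \<Rightarrow> 'a"
  assumes "infinite (UNIV :: 'a set)"
    and "flat_ok (Xi \<Gamma> \<phi>) fl"
  shows "\<forall>\<xi>\<in>Xi \<Gamma> \<phi>. \<forall>X U. baseM (Xi \<Gamma> \<phi>) fl \<subseteq> X \<longrightarrow>
           (supp X U (At (fl \<xi>)) \<longleftrightarrow> supp X U \<xi>)"
proof
  fix \<xi> assume "\<xi> \<in> Xi \<Gamma> \<phi>"
  then show "\<forall>X U. baseM (Xi \<Gamma> \<phi>) fl \<subseteq> X \<longrightarrow> (supp X U (At (fl \<xi>)) \<longleftrightarrow> supp X U \<xi>)"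
  proof (induction \<xi>)
    case (At p)
    then show ?case using assms(2) unfolding flat_ok_def by simp
  next
    case (Tensor \<sigma> \<tau>)
    have s: "\<sigma> \<in> Xi \<Gamma> \<phi>" "\<tau> \<in> Xi \<Gamma> \<phi>"
      using Xi_closed[OF Tensor.prems] by (auto simp: subfmls_self)
    note IH1 = Tensor.IH(1)[OF s(1)] and IH2 = Tensor.IH(2)[OF s(2)]
    show ?case
    proof (intro allI impI iffI)
      fix X U assume M: "baseM (Xi \<Gamma> \<phi>) fl \<subseteq> X" and d: "supp X U (At (fl (Tensor \<sigma> \<tau>)))"
      show "supp X U (Tensor \<sigma> \<tau>)"
      proof (unfold supp.simps, intro allI impI)
        fix Y U' p assume Y: "X \<subseteq> Y" and
          H: "\<forall>Z V W. Y \<subseteq> Z \<longrightarrow> supp Z V \<sigma> \<longrightarrow> supp Z W \<tau> \<longrightarrow> deriv Z (U' + (V + W)) p"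
        have MY: "baseM (Xi \<Gamma> \<phi>) fl \<subseteq> Y" using subset_trans[OF M Y] .
        have r: "([({#}, fl (Tensor \<sigma> \<tau>)), ({#fl \<sigma>, fl \<tau>#}, p)], p) \<in> Y"
          using subsetD[OF MY mT2[OF Tensor.prems]] .
        have "supp Y {#fl \<sigma>#} (At (fl \<sigma>))" by (simp add: deriv.Ref)
        then have a: "supp Y {#fl \<sigma>#} \<sigma>" using IH1[rule_format, OF MY] by simp
        have "supp Y {#fl \<tau>#} (At (fl \<tau>))" by (simp add: deriv.Ref)
        then have b: "supp Y {#fl \<tau>#} \<tau>" using IH2[rule_format, OF MY] by simp
        have c0: "deriv Y (U' + ({#fl \<sigma>#} + {#fl \<tau>#})) p" using H a b by blast
        have c: "deriv Y (U' + {#fl \<sigma>, fl \<tau>#}) p" using c0 by (simp add: add_mset_commute)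
        have "deriv Y U (fl (Tensor \<sigma> \<tau>))" using deriv_mono[OF d[simplified] Y] .
        then show "deriv Y (U + U') p" using app2[OF r _ c] by simp
      qed
    next
      fix X U assume M: "baseM (Xi \<Gamma> \<phi>) fl \<subseteq> X" and d: "supp X U (Tensor \<sigma> \<tau>)"
      have "\<forall>Y V W. X \<subseteq> Y \<longrightarrow> supp Y V \<sigma> \<longrightarrow> supp Y W \<tau> \<longrightarrow> deriv Y ({#} + (V + W)) (fl (Tensor \<sigma> \<tau>))"
      proof (intro allI impI)
        fix Y V W assume Y: "X \<subseteq> Y" and v: "supp Y V \<sigma>" and w: "supp Y W \<tau>"
        have MY: "baseM (Xi \<Gamma> \<phi>) fl \<subseteq> Y" using subset_trans[OF M Y] .
        have r: "([({#}, fl \<sigma>), ({#}, fl \<tau>)], fl (Tensor \<sigma> \<tau>)) \<in> Y"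
          using subsetD[OF MY mT1[OF Tensor.prems]] .
        have "deriv Y V (fl \<sigma>)" using IH1[rule_format, OF MY] v by simp
        moreover have "deriv Y W (fl \<tau>)" using IH2[rule_format, OF MY] w by simp
        ultimately show "deriv Y ({#} + (V + W)) (fl (Tensor \<sigma> \<tau>))" using app2[OF r] by simp
      qed
      then have "deriv X (U + {#}) (fl (Tensor \<sigma> \<tau>))" using d unfolding supp.simps by blast
      then show "supp X U (At (fl (Tensor \<sigma> \<tau>)))" by simp
    qed
  next
    case One
    show ?case
    proof (intro allI impI iffI)
      fix X U assume M: "baseM (Xi \<Gamma> \<phi>) fl \<subseteq> X" and d: "supp X U (At (fl One))"
      show "supp X U One"
      proof (unfold supp.simps, intro allI impI)
        fix Y U' p assume Y: "X \<subseteq> Y" and H: "deriv Y U' p"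
        have r: "([({#}, fl One), ({#}, p)], p) \<in> Y"
          using subsetD[OF subset_trans[OF M Y] mO2[OF One.prems]] .
        have "deriv Y U (fl One)" using deriv_mono[OF d[simplified] Y] .
        then show "deriv Y (U + U') p" using app2[OF r _ ] H by simp
      qed
    next
      fix X U assume M: "baseM (Xi \<Gamma> \<phi>) fl \<subseteq> X" and d: "supp X U One"
      have r: "([], fl One) \<in> X" using subsetD[OF M mO1[OF One.prems]] .
      have "deriv X {#} (fl One)" using app0[OF r] .
      then have "deriv X (U + {#}) (fl One)" using d unfolding supp.simps by blast
      then show "supp X U (At (fl One))" by simp
    qed
  next
    case (Lolli \<sigma> \<tau>)
    have s: "\<sigma> \<in> Xi \<Gamma> \<phi>" "\<tau> \<in> Xi \<Gamma> \<phi>"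
      using Xi_closed[OF Lolli.prems] by (auto simp: subfmls_self)
    note IH1 = Lolli.IH(1)[OF s(1)] and IH2 = Lolli.IH(2)[OF s(2)]
    show ?case
    proof (intro allI impI iffI)
      fix X U assume M: "baseM (Xi \<Gamma> \<phi>) fl \<subseteq> X" and d: "supp X U (At (fl (Lolli \<sigma> \<tau>)))"
      show "supp X U (Lolli \<sigma> \<tau>)"
      proof (unfold supp.simps, intro allI impI)
        fix Y U' assume Y: "X \<subseteq> Y" and v: "supp Y U' \<sigma>"
        have MY: "baseM (Xi \<Gamma> \<phi>) fl \<subseteq> Y" using subset_trans[OF M Y] .
        have r: "([({#}, fl (Lolli \<sigma> \<tau>)), ({#}, fl \<sigma>)], fl \<tau>) \<in> Y"
          using subsetD[OF MY mL2[OF Lolli.prems]] .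
        have "deriv Y U (fl (Lolli \<sigma> \<tau>))" using deriv_mono[OF d[simplified] Y] .
        moreover have "deriv Y U' (fl \<sigma>)" using IH1[rule_format, OF MY] v by simp
        ultimately have "deriv Y (U + U') (fl \<tau>)" using app2[OF r] by simp
        then show "supp Y (U + U') \<tau>" using IH2[rule_format, OF MY] by simp
      qed
    next
      fix X U assume M: "baseM (Xi \<Gamma> \<phi>) fl \<subseteq> X" and d: "supp X U (Lolli \<sigma> \<tau>)"
      have r: "([({#fl \<sigma>#}, fl \<tau>)], fl (Lolli \<sigma> \<tau>)) \<in> X"
        using subsetD[OF M mL1[OF Lolli.prems]] .
      have "supp X {#fl \<sigma>#} (At (fl \<sigma>))" by (simp add: deriv.Ref)
      then have "supp X {#fl \<sigma>#} \<sigma>" using IH1[rule_format, OF M] by simp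
      then have "supp X (U + {#fl \<sigma>#}) \<tau>" using d[simplified] by blast
      then have "deriv X (U + {#fl \<sigma>#}) (fl \<tau>)" using IH2[rule_format, OF M] by simp
      then show "supp X U (At (fl (Lolli \<sigma> \<tau>)))" using app1[OF r] by simp
    qed
  qed
qed

end
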